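(* (i) For every $y\ge R$, the function $\lambda\mapsto\mathscr u(\lambda,y)$ is strictly decreasing on $(0,\infty)$. (ii) For every $u>0$ and $y\ge R$ there exists a unique $\lambda>0$ such that $u=\mathscr u(\lambda,y)$.
   Context: Fix an integer $d\ge 2$, a bounded domain $D_b\subset\mathbb R^{d-1}$ with smooth boundary, and $R>0$. Assume that $D_b$ satisfies the inner ball condition with radius $R$: for every $x\in\partial D_b$ there is a unique open $(d-1)$-dimensional ball of radius $R$ contained in $D_b$ whose boundary is tangent to $\partial D_b$ at $x$, and $x$ is the only point of intersection of that ball's boundary with $\partial D_b$. Let $D=D_b\times[0,\infty)\subset\mathbb R^d$, and assume a closed ball of radius $R$ fits in the interior of $D$. $\mathcal B(z,r)$ denotes the open ball with center $z$ and radius $r$. Let $D_b'=\{x\in D_b:\mathcal B((x,y),R)\subset D\text{ for all }y>R\}$. For $\gamma>0$, $y\ge R$ and integers $k\ge0$, let $$\mathscr h_k(\gamma,y)=\int_{D\setminus\mathcal B((\tilde x,y),R)}\gamma r^ke^{-\gamma r}\,dx\,dr,$$ where $\tilde x\in D_b'$ is arbitrary (the value does not depend on the choice), $x\in\mathbb R^{d-1}$ is the horizontal coordinate and $r$ the vertical coordinate, with Lebesgue measures $dx$ and $dr$. Set $\mathscr u=\mathscr h_1/\mathscr h_0$. *)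

theory Defs
  imports "HOL-Analysis.Analysis"
begin

text \<open>Horizontal space R^(d-1) is modelled as real^'n (so d - 1 = CARD('n) \<ge> 1, i.e. d \<ge> 2);
  points of R^d are pairs (x, r) :: real^'n \<times> real (horizontal, vertical), with the
  Euclidean (product) metric.\<close>

fun pderivs :: "'n::finite list \<Rightarrow> (real^'n \<Rightarrow> real) \<Rightarrow> real^'n \<Rightarrow> real" where
  "pderivs [] f = f"
| "pderivs (i # is) f = (\<lambda>x. deriv (\<lambda>t. pderivs is f (x + t *\<^sub>R axis i 1)) 0)"

definition smooth_on :: "(real^'n::finite) set \<Rightarrow> (real^'n \<Rightarrow> real) \<Rightarrow> bool" where
  "smooth_on U f \<longleftrightarrow>
     (\<forall>is. continuous_on U (pderivs is f) \<and>
        (\<forall>i. \<forall>x\<in>U. (\<lambda>t. pderivs is f (x + t *\<^sub>R axis i 1)) differentiable (at 0)))"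

definition smooth_boundary :: "(real^'n::finite) set \<Rightarrow> bool" where
  "smooth_boundary \<Omega> \<longleftrightarrow>
     (\<forall>p\<in>frontier \<Omega>. \<exists>U \<phi>. open U \<and> p \<in> U \<and> smooth_on U \<phi> \<and>
        (\<forall>x\<in>U. \<exists>i. pderivs [i] \<phi> x \<noteq> 0) \<and>
        \<Omega> \<inter> U = {x\<in>U. \<phi> x < 0})"

definition inner_ball_condition :: "(real^'n::finite) set \<Rightarrow> real \<Rightarrow> bool" where
  "inner_ball_condition \<Omega> R \<longleftrightarrow>
     (\<forall>x\<in>frontier \<Omega>. \<exists>!c. ball c R \<subseteq> \<Omega> \<and> sphere c R \<inter> frontier \<Omega> = {x})"

definition cyl :: "(real^'n::finite) set \<Rightarrow> ((real^'n) \<times> real) set" where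
  "cyl Db = Db \<times> {0..}"

definition Db' :: "(real^'n::finite) set \<Rightarrow> real \<Rightarrow> (real^'n) set" where
  "Db' Db R = {x\<in>Db. \<forall>y>R. ball (x, y) R \<subseteq> cyl Db}"

definition hk :: "(real^'n::finite) set \<Rightarrow> real \<Rightarrow> real^'n \<Rightarrow> nat \<Rightarrow> real \<Rightarrow> real \<Rightarrow> real" where
  "hk Db R xt k \<gamma> y =
     set_lebesgue_integral lborel (cyl Db - ball (xt, y) R)
       (\<lambda>(x, r). \<gamma> * r ^ k * exp (- \<gamma> * r))"

definition uu :: "(real^'n::finite) set \<Rightarrow> real \<Rightarrow> real^'n \<Rightarrow> real \<Rightarrow> real \<Rightarrow> real" where
  "uu Db R xt \<gamma> y = hk Db R xt 1 \<gamma> y / hk Db R xt 0 \<gamma> y"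

end

theory Submission imports Defs "HOL-Probability.Sinc_Integral" begin

lemma prod_integrable:
  fixes f :: "'a::euclidean_space \<Rightarrow> real" and g :: "'b::euclidean_space \<Rightarrow> real"
  assumes f: "integrable lborel f" and g: "integrable lborel g"
  shows "integrable lborel (\<lambda>p::'a\<times>'b. f (fst p) * g (snd p))"
proof -
  have fm[measurable]: "f \<in> borel_measurable borel" using f by auto
  have gm[measurable]: "g \<in> borel_measurable borel" using g by auto
  have "(\<integral>\<^sup>+ p. ennreal (norm (f (fst p) * g (snd p))) \<partial>(lborel \<Otimes>\<^sub>M lborel))
     = (\<integral>\<^sup>+ x. \<integral>\<^sup>+ y. ennreal (norm (f x)) * ennreal (norm (g y)) \<partial>lborel \<partial>lborel)"
    by (subst lborel.nn_integral_fst[symmetric]) (auto simp: abs_mult ennreal_mult)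
  also have "\<dots> = (\<integral>\<^sup>+ x. ennreal (norm (f x)) \<partial>lborel) * (\<integral>\<^sup>+ y. ennreal (norm (g y)) \<partial>lborel)"
    by (simp add: nn_integral_cmult nn_integral_multc)
  also have "\<dots> < \<infinity>" using f g unfolding integrable_iff_bounded
    by (simp add: ennreal_mult_less_top)
  finally show ?thesis unfolding lborel_prod[symmetric] integrable_iff_bounded by simp
qed

lemma Times_borel[intro]:
  fixes A :: "'a::euclidean_space set" and B :: "'b::euclidean_space set"
  assumes "A \<in> sets borel" "B \<in> sets borel"
  shows "A \<times> B \<in> sets borel"
proof -
  have "A \<times> B \<in> sets (lborel \<Otimes>\<^sub>M lborel)" using assms by (intro pair_measureI) auto
  then show ?thesis by (metis lborel_prod sets_lborel)
qed

lemma emeasure_Times_lborel: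
  fixes A :: "'a::euclidean_space set" and B :: "'b::euclidean_space set"
  assumes "A \<in> sets borel" "B \<in> sets borel"
  shows "emeasure lborel (A \<times> B) = emeasure lborel A * emeasure lborel B"
  using assms by (simp add: lborel_prod[symmetric] lborel.emeasure_pair_measure_Times)

lemma integrable_pow_exp:
  fixes g :: real assumes g: "g > 0"
  shows "integrable lborel (\<lambda>r::real. indicator {0..} r * (r^k * exp (-g*r)))"
proof -
  let ?h = "\<lambda>x::real. x^k * exp (-x) * indicator {0 <..} x"
  have "integrable lborel ?h" using has_bochner_integral_I0i_power_exp_m[of k] by (auto intro: integrable.intros)
  then have "integrable lborel (\<lambda>x. ?h (0 + g * x))"
    using lborel_integrable_real_affine_iff[of g ?h 0] g by simp
  then have "integrable lborel (\<lambda>x. ?h (0 + g * x) / g^k)" by simp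
  moreover have "?h (0 + g * x) / g^k = indicator {0<..} x * (x^k * exp (-g*x))" for x
    using g by (simp add: indicator_def zero_less_mult_iff power_mult_distrib)
  ultimately have "integrable lborel (\<lambda>x. indicator {0<..} x * (x^k * exp (-g*x)))" by simp
  moreover have "(AE x in lborel. indicator {0<..} x * (x^k * exp (-g*x)) = indicator {0..} x * (x^k * exp (-g*x)))"
    by (auto intro!: eventually_mono[OF AE_lborel_singleton[of 0]] simp: indicator_def)
  ultimately show ?thesis
    by (subst integrable_cong_AE[symmetric]) auto
qed

lemma exp_lip:
  fixes g g' g0 r :: real
  assumes "g0 \<le> g" "g0 \<le> g'" "0 \<le> r"
  shows "\<bar>exp (-g*r) - exp (-g'*r)\<bar> \<le> \<bar>g - g'\<bar> * (r * exp (-g0*r))"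
proof -
  have key: "exp (-a*r) - exp (-b*r) \<le> (b - a) * (r * exp (-g0*r))" if "g0 \<le> a" "a \<le> b" for a b
  proof -
    have "exp (-a*r) - exp (-b*r) = exp (-a*r) * (1 - exp (-((b-a)*r)))"
      by (simp add: algebra_simps flip: exp_add)
    also have "\<dots> \<le> exp (-a*r) * ((b-a)*r)"
      using exp_ge_add_one_self[of "-((b-a)*r)"] by (intro mult_left_mono) auto
    also have "\<dots> \<le> exp (-g0*r) * ((b-a)*r)"
      using that assms by (intro mult_right_mono) (auto intro: mult_right_mono)
    finally show ?thesis by (simp add: algebra_simps)
  qed
  have mono: "exp (-b*r) \<le> exp (-a*r)" if "a \<le> b" for a b
    using that assms by (auto intro: mult_right_mono)
  show ?thesis
  proof (cases "g \<le> g'")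
    case True then show ?thesis using key[of g g'] mono[of g g'] assms by (simp add: abs_if)
  next
    case False then show ?thesis using key[of g' g] mono[of g' g] assms by (simp add: abs_if)
  qed
qed

lemma lipschitz_isCont:
  fixes f :: "real \<Rightarrow> real"
  assumes "d > 0" "\<And>y. \<bar>y - x\<bar> < d \<Longrightarrow> \<bar>f y - f x\<bar> \<le> L * \<bar>y - x\<bar>"
  shows "isCont f x"
proof -
  have "\<exists>e>0. \<forall>y. dist y x < e \<longrightarrow> dist (f y) (f x) < r" if r: "r > 0" for r
  proof (intro exI[of _ "min d (r / (\<bar>L\<bar> + 1))"] conjI allI impI)
    show "0 < min d (r / (\<bar>L\<bar> + 1))" using assms r by auto
    fix y assume y: "dist y x < min d (r / (\<bar>L\<bar> + 1))"
    then have "\<bar>f y - f x\<bar> \<le> L * \<bar>y - x\<bar>" using assms by (auto simp: dist_real_def)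
    also have "\<dots> \<le> (\<bar>L\<bar> + 1) * \<bar>y - x\<bar>" by (intro mult_right_mono) auto
    also have "\<dots> < (\<bar>L\<bar> + 1) * (r / (\<bar>L\<bar> + 1))" using y
      by (intro mult_strict_left_mono) (auto simp: dist_real_def)
    also have "\<dots> = r" by simp
    finally show "dist (f y) (f x) < r" by (simp add: dist_real_def)
  qed
  then show ?thesis by (simp add: continuous_at_eps_delta)
qed
lemma measure_Times_lborel:
  fixes A :: "'a::euclidean_space set" and B :: "'b::euclidean_space set"
  assumes "A \<in> sets borel" "B \<in> sets borel"
  shows "measure lborel (A \<times> B) = measure lborel A * measure lborel B"
  using assms by (simp add: measure_def emeasure_Times_lborel enn2real_mult)

lemma ptw_ineq:
  fixes r m a b :: real assumes "a < b"
  shows "(r - m) * exp (-b*r) \<le> exp (-(b-a)*m) * ((r - m) * exp (-a*r))"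
    and "r \<noteq> m \<Longrightarrow> (r - m) * exp (-b*r) < exp (-(b-a)*m) * ((r - m) * exp (-a*r))"
proof -
  have e: "exp (-b*r) = exp (-a*r) * exp (-(b-a)*r)" by (simp add: algebra_simps flip: exp_add)
  have lt: "(r - m) * exp (-b*r) < exp (-(b-a)*m) * ((r - m) * exp (-a*r))" if "r \<noteq> m"
  proof (cases "r > m")
    case True
    then have "exp (-(b-a)*r) < exp (-(b-a)*m)" using assms by (simp add: mult_strict_left_mono)
    then have "(r - m) * exp (-a*r) * exp (-(b-a)*r) < (r - m) * exp (-a*r) * exp (-(b-a)*m)"
      using True by (intro mult_strict_left_mono) auto
    moreover have "(r - m) * exp (-b*r) = (r - m) * exp (-a*r) * exp (-(b-a)*r)"
      by (simp only: e mult.assoc)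
    ultimately show ?thesis by (simp only: mult.commute mult.left_commute mult.assoc)
  next
    case False
    then have "r < m" using that by auto
    then have "exp (-(b-a)*m) < exp (-(b-a)*r)" using assms by (simp add: mult_strict_left_mono)
    then have "(m - r) * exp (-a*r) * exp (-(b-a)*m) < (m - r) * exp (-a*r) * exp (-(b-a)*r)"
      using \<open>r < m\<close> by (intro mult_strict_left_mono) auto
    then have "(r - m) * exp (-a*r) * exp (-(b-a)*r) < (r - m) * exp (-a*r) * exp (-(b-a)*m)"
      by (simp add: algebra_simps)
    moreover have "(r - m) * exp (-b*r) = (r - m) * exp (-a*r) * exp (-(b-a)*r)"
      by (simp only: e mult.assoc)
    ultimately show ?thesis by (simp only: mult.commute mult.left_commute mult.assoc)
  qed
  then show "r \<noteq> m \<Longrightarrow> (r - m) * exp (-b*r) < exp (-(b-a)*m) * ((r - m) * exp (-a*r))" .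
  show "(r - m) * exp (-b*r) \<le> exp (-(b-a)*m) * ((r - m) * exp (-a*r))"
    using lt by (cases "r = m") force+
qed

definition JJ :: "('a::euclidean_space \<times> real) set \<Rightarrow> nat \<Rightarrow> real \<Rightarrow> real" where
  "JJ S k g = integral\<^sup>L lborel (\<lambda>p. indicator S p * (snd p ^ k * exp (-g * snd p)))"

lemma abstract_main:
  fixes S :: "('a::euclidean_space \<times> real) set" and Db Bz :: "'a set" and T :: real
  assumes S[measurable]: "S \<in> sets borel"
    and SD: "S \<subseteq> Db \<times> {0..}"
    and Db[measurable]: "Db \<in> sets borel" and Dbf: "emeasure lborel Db < \<infinity>"
    and Bz[measurable]: "Bz \<in> sets borel" and Bzp: "0 < emeasure lborel Bz" and Bzf: "emeasure lborel Bz < \<infinity>"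
    and T: "Bz \<times> {T<..} \<subseteq> S" "0 \<le> T"
    and near0: "\<And>e. e > 0 \<Longrightarrow> \<exists>A. A \<in> sets borel \<and> A \<subseteq> S \<and> A \<subseteq> UNIV \<times> {..e} \<and> 0 < emeasure lborel A \<and> emeasure lborel A < \<infinity>"
  shows "(\<forall>a b. 0 < a \<longrightarrow> a < b \<longrightarrow> JJ S 1 b / JJ S 0 b < JJ S 1 a / JJ S 0 a)
       \<and> (\<forall>g>0. JJ S 0 g > 0)
       \<and> (\<forall>u>0. \<exists>!g. g > 0 \<and> u = JJ S 1 g / JJ S 0 g)"
proof -
  define f where "f k g p = indicator S p * (snd p ^ k * exp (-g * snd p))" for k g and p :: "'a \<times> real"
  have J: "JJ S k g = integral\<^sup>L lborel (f k g)" for k g unfolding JJ_def f_def ..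
  have fm[measurable]: "f k g \<in> borel_measurable lborel" for k g
  proof -
    have "(\<lambda>p::'a\<times>real. snd p ^ k * exp (-g * snd p)) \<in> borel_measurable borel"
      by (intro borel_measurable_continuous_onI continuous_intros)
    then show ?thesis unfolding f_def measurable_lborel1
      by (intro borel_measurable_times[OF borel_measurable_indicator]) auto
  qed
  have int: "integrable lborel (f k g)" if g: "g > 0" for k g
  proof -
    let ?D = "\<lambda>p::'a\<times>real. indicator Db (fst p) * (indicator {0..} (snd p) * (snd p^k * exp(-g * snd p)))"
    have "integrable lborel ?D"
      by (rule prod_integrable[OF integrable_real_indicator[OF _ Dbf] integrable_pow_exp[OF g]]) simp
    moreover have "AE p in lborel. norm (f k g p) \<le> norm (?D p)"
      using SD by (intro AE_I2) (auto simp: f_def indicator_def abs_mult)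
    ultimately show ?thesis
      using Bochner_Integration.integrable_bound fm by blast
  qed
  define mB where "mB = measure lborel Bz"
  have mB: "mB > 0" using Bzp Bzf by (simp add: mB_def emeasure_eq_ennreal_measure)
  have mBl: "measure lborel (Bz \<times> {c<..<c+l}) = mB * l" if "l \<ge> 0" for c l :: real
  proof -
    have "measure lborel {c<..<c+l} = l" using that by (simp add: measure_def emeasure_lborel_Ioo[of c "c+l"])
    then show ?thesis by (subst measure_Times_lborel) (auto simp: mB_def)
  qed
  have mBI: "measure lborel (Bz \<times> {c<..<c+1}) = mB" for c :: real
    using mBl[of 1 c] by simp
  have eBl: "emeasure lborel (Bz \<times> {c<..<c+l}) < \<infinity>" if "l \<ge> 0" for c l :: real
    using that Bzf by (subst emeasure_Times_lborel) (auto simp: ennreal_mult_less_top)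
  have pos: "JJ S 0 g > 0" if g: "g > 0" for g
  proof -
    let ?A = "Bz \<times> {T<..<T+1}"
    have "(\<integral>p. exp (-g*(T+1)) * indicator ?A p \<partial>lborel) \<le> integral\<^sup>L lborel (f 0 g)"
    proof (rule integral_mono)
      show "integrable lborel (\<lambda>p. exp (-g*(T+1)) * indicator ?A p)"
        using Bzf by (intro integrable_mult_right integrable_real_indicator) (auto simp: emeasure_Times_lborel ennreal_mult_less_top)
      show "integrable lborel (f 0 g)" using int g .
      fix p :: "'a \<times> real"
      show "exp (-g*(T+1)) * indicator ?A p \<le> f 0 g p"
        using T g by (cases p) (auto simp: f_def indicator_def subset_iff mult_left_mono)
    qed
    also have "\<dots> = JJ S 0 g" by (simp add: J)
    finally have "exp (-g*(T+1)) * mB \<le> JJ S 0 g" using mBI[of T] by simp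
    moreover have "0 < exp (-g*(T+1)) * mB" using mB by simp
    ultimately show ?thesis by linarith
  qed
  have dec: "JJ S 1 b / JJ S 0 b < JJ S 1 a / JJ S 0 a" if ab: "0 < a" "a < b" for a b
  proof -
    have b: "b > 0" using ab by simp
    define m where "m = JJ S 1 a / JJ S 0 a"
    define E where "E = exp (-(b-a)*m)"
    define L where "L p = f 1 b p - m * f 0 b p" for p
    define Rr where "Rr p = E * (f 1 a p - m * f 0 a p)" for p
    have iL: "integrable lborel L" unfolding L_def using int[OF b] by auto
    have iR: "integrable lborel Rr" unfolding Rr_def using int[OF ab(1)] by auto
    have intL: "integral\<^sup>L lborel L = JJ S 1 b - m * JJ S 0 b" unfolding L_def J using int[OF b] by simp
    have intR: "integral\<^sup>L lborel Rr = 0"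
    proof -
      have "integral\<^sup>L lborel Rr = E * (JJ S 1 a - m * JJ S 0 a)" unfolding Rr_def J using int[OF ab(1)] by simp
      also have "\<dots> = 0" using pos[OF ab(1)] by (simp add: m_def)
      finally show ?thesis .
    qed
    have Lp: "L p = indicator S p * ((snd p - m) * exp (-b * snd p))" for p
      by (simp add: L_def f_def algebra_simps)
    have Rp: "Rr p = indicator S p * (E * ((snd p - m) * exp (-a * snd p)))" for p
      by (simp add: Rr_def f_def E_def algebra_simps)
    have le: "L p \<le> Rr p" for p
      using ptw_ineq(1)[OF ab(2), of "snd p" m] by (simp add: Lp Rp E_def indicator_def)
    define c where "c = (if m \<le> T + 2 then T + 3 else T)"
    let ?A = "Bz \<times> {c<..<c+1}"
    have AS: "?A \<subseteq> S" using T(1) by (auto simp: c_def)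
    have lt: "L p < Rr p" if "p \<in> ?A" for p
    proof -
      have ne: "snd p \<noteq> m" using that by (auto simp: c_def split: if_splits)
      have "p \<in> S" using AS that by auto
      then show ?thesis using ptw_ineq(2)[OF ab(2) ne] by (simp add: Lp Rp E_def)
    qed
    have "integral\<^sup>L lborel L < 0"
    proof (rule ccontr)
      assume "\<not> ?thesis"
      moreover have "integral\<^sup>L lborel (\<lambda>p. Rr p - L p) = integral\<^sup>L lborel Rr - integral\<^sup>L lborel L"
        using iL iR by simp
      moreover have "integral\<^sup>L lborel (\<lambda>p. Rr p - L p) \<ge> 0"
        using le by (intro integral_nonneg_AE AE_I2) (simp add: algebra_simps)
      ultimately have "integral\<^sup>L lborel (\<lambda>p. Rr p - L p) = 0" using intR by linarith
      then have "AE p in lborel. Rr p - L p = 0"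
        using integral_nonneg_eq_0_iff_AE[of lborel "\<lambda>p. Rr p - L p"] iR iL le by (auto simp: algebra_simps)
      then obtain N where N: "{p \<in> space lborel. \<not> Rr p - L p = 0} \<subseteq> N" "emeasure lborel N = 0" "N \<in> sets lborel"
        by (rule AE_E)
      then have "?A \<subseteq> N" using lt by force
      then have "emeasure lborel ?A \<le> 0" using N emeasure_mono[of ?A N lborel] by simp
      moreover have "emeasure lborel ?A = emeasure lborel Bz"
        by (subst emeasure_Times_lborel) (auto simp: emeasure_lborel_Ioo[of c "c+1"])
      ultimately show False using Bzp by simp
    qed
    then have "JJ S 1 b < m * JJ S 0 b" using intL by simp
    then have "JJ S 1 b / JJ S 0 b < m" using pos[OF b] by (simp add: pos_divide_less_eq)
    then show ?thesis by (simp add: m_def)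
  qed
  have lip: "\<bar>JJ S k y - JJ S k x\<bar> \<le> JJ S (Suc k) (x/2) * \<bar>y - x\<bar>" if x: "x > 0" "\<bar>y - x\<bar> < x/2" for k x y
  proof -
    have y: "y > 0" "x/2 \<le> y" using that by (auto simp: abs_if split: if_splits)
    have "\<bar>JJ S k y - JJ S k x\<bar> = \<bar>\<integral>p. f k y p - f k x p \<partial>lborel\<bar>"
      using int[OF y(1)] int[OF x(1)] by (simp add: J)
    also have "\<dots> \<le> (\<integral>p. \<bar>y - x\<bar> * f (Suc k) (x/2) p \<partial>lborel)"
    proof (rule integral_abs_bound_integral)
      show "integrable lborel (\<lambda>p. f k y p - f k x p)" using int[OF y(1)] int[OF x(1)] by auto
      show "integrable lborel (\<lambda>p. \<bar>y - x\<bar> * f (Suc k) (x/2) p)" using int[of "x/2"] x by auto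
      fix p :: "'a \<times> real"
      show "\<bar>f k y p - f k x p\<bar> \<le> \<bar>y - x\<bar> * f (Suc k) (x/2) p"
      proof (cases "p \<in> S")
        case True
        define r where "r = snd p"
        have r: "r \<ge> 0" using True SD by (auto simp: r_def)
        have "\<bar>exp (-y*r) - exp (-x*r)\<bar> \<le> \<bar>y - x\<bar> * (r * exp (-(x/2)*r))"
          by (rule exp_lip) (use y x r in auto)
        then have "r^k * \<bar>exp (-y*r) - exp (-x*r)\<bar> \<le> r^k * (\<bar>y - x\<bar> * (r * exp (-(x/2)*r)))"
          using r by (intro mult_left_mono) auto
        moreover have "\<bar>f k y p - f k x p\<bar> = r^k * \<bar>exp (-y*r) - exp (-x*r)\<bar>"
          using True r by (simp add: f_def r_def right_diff_distrib[symmetric] abs_mult)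
        moreover have "\<bar>y - x\<bar> * f (Suc k) (x/2) p = r^k * (\<bar>y - x\<bar> * (r * exp (-(x/2)*r)))"
          using True by (simp add: f_def r_def algebra_simps)
        ultimately show ?thesis by (simp only:)
      qed (simp add: f_def)
    qed
    also have "\<dots> = JJ S (Suc k) (x/2) * \<bar>y - x\<bar>" by (simp add: J)
    finally show ?thesis .
  qed
  have contJ: "isCont (JJ S k) x" if "x > 0" for k x
    by (rule lipschitz_isCont[of "x/2"]) (use that lip in auto)
  have cont: "isCont (\<lambda>g. JJ S 1 g / JJ S 0 g) x" if "x > 0" for x
    using contJ[OF that] pos[OF that] by (intro isCont_divide) auto
  have exist: "\<exists>g>0. u = JJ S 1 g / JJ S 0 g" if u: "u > 0" for u
  proof -
    define M0 where "M0 = measure lborel (Db \<times> {0..u})"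
    have eM0: "emeasure lborel (Db \<times> {0..u}) < \<infinity>"
      using Dbf u by (subst emeasure_Times_lborel) (auto simp: ennreal_mult_less_top emeasure_lborel_Icc_eq)
    have M0: "M0 \<ge> 0" by (simp add: M0_def)
    define T' where "T' = max (u+1) T"
    define N where "N = 2 * (u*M0 + 1) / mB"
    have N: "N > 0" using mB M0 u by (simp add: N_def add_nonneg_pos)
    have TN: "T' + N > 0" using N u by (simp add: T'_def)
    define gs where "gs = ln 2 / (T' + N)"
    have gs: "gs > 0" using TN by (simp add: gs_def)
    have egs: "exp (-gs * (T'+N)) = 1/2"
    proof -
      have "-gs * (T'+N) = - ln 2" using TN by (simp add: gs_def)
      then show ?thesis by (simp add: exp_minus)
    qed
    let ?AN = "Bz \<times> {T'<..<T'+N}"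
    have ANS: "?AN \<subseteq> S" using T(1) by (auto simp: T'_def)
    have low: "-u * indicator (Db \<times> {0..u}) p + (1/2) * indicator ?AN p \<le> f 1 gs p - u * f 0 gs p" for p
    proof (cases "p \<in> S")
      case False then show ?thesis using ANS u by (auto simp: f_def indicator_def)
    next
      case True
      obtain x r where p: "p = (x,r)" by (cases p)
      have xr: "x \<in> Db" "r \<ge> 0" using True SD p by auto
      have fe: "f 1 gs p - u * f 0 gs p = (r - u) * exp (-gs*r)" using True by (simp add: f_def p algebra_simps)
      show ?thesis
      proof (cases "p \<in> ?AN")
        case True
        then have r: "T' < r" "r < T' + N" by (auto simp: p)
        then have "exp (-gs*(T'+N)) \<le> exp (-gs * r)" using gs by simp
        then have e: "1/2 \<le> exp(-gs*r)" using egs by linarith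
        have r1: "r - u \<ge> 1" using r by (simp add: T'_def)
        have "1 * (1/2) \<le> (r-u) * exp(-gs*r)" by (rule mult_mono) (use e r1 in auto)
        moreover have "p \<notin> Db \<times> {0..u}" using r u by (auto simp: p T'_def)
        ultimately show ?thesis using True fe by (simp add: indicator_def)
      next
        case False
        show ?thesis
        proof (cases "r \<le> u")
          case True
          have "exp(-gs*r) \<le> 1" using gs xr by simp
          then have "u * exp(-gs*r) \<le> u" using u by (simp add: mult_left_le)
          moreover have "0 \<le> r * exp(-gs*r)" using xr by simp
          ultimately have "-u \<le> (r-u)*exp(-gs*r)" by (simp add: left_diff_distrib)
          then show ?thesis using False True xr fe by (auto simp: indicator_def p)
        next
          case False
          then have "0 \<le> (r-u)*exp(-gs*r)" by simp
          then show ?thesis using \<open>p \<notin> ?AN\<close> False fe by (auto simp: indicator_def p)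
        qed
      qed
    qed
    have iAN: "integrable lborel (indicator ?AN :: _ \<Rightarrow> real)"
      using eBl[of N T'] N by (intro integrable_real_indicator) auto
    have iD: "integrable lborel (indicator (Db \<times> {0..u}) :: _ \<Rightarrow> real)"
      using eM0 by (intro integrable_real_indicator) auto
    have "(\<integral>p. -u * indicator (Db \<times> {0..u}) p + (1/2) * indicator ?AN p \<partial>lborel)
        \<le> (\<integral>p. f 1 gs p - u * f 0 gs p \<partial>lborel)"
      by (rule integral_mono) (use low iAN iD int[OF gs] in auto)
    moreover have "(\<integral>p. -u * indicator (Db \<times> {0..u}) p + (1/2) * indicator ?AN p \<partial>lborel)
        = -u * M0 + (1/2) * (mB * N)"
      using iAN iD mBl[of N T'] N by (simp add: M0_def)
    moreover have "-u * M0 + (1/2) * (mB * N) = 1" using mB by (simp add: N_def field_simps)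
    moreover have "(\<integral>p. f 1 gs p - u * f 0 gs p \<partial>lborel) = JJ S 1 gs - u * JJ S 0 gs"
      using int[OF gs] by (simp add: J)
    ultimately have "JJ S 1 gs - u * JJ S 0 gs \<ge> 1" by linarith
    then have "u * JJ S 0 gs < JJ S 1 gs" by linarith
    then have hs: "u < JJ S 1 gs / JJ S 0 gs" using pos[OF gs] by (simp add: pos_less_divide_eq)
    obtain A where A: "A \<in> sets borel" "A \<subseteq> S" "A \<subseteq> UNIV \<times> {..u/4}" "0 < emeasure lborel A" "emeasure lborel A < \<infinity>"
      using near0[of "u/4"] u by auto
    define mA where "mA = measure lborel A"
    have mA: "mA > 0" using A by (simp add: mA_def emeasure_eq_ennreal_measure)
    define C where "C = JJ S 1 1"
    have C: "C \<ge> 0" unfolding C_def J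
      by (intro integral_nonneg_AE AE_I2) (use SD in \<open>auto simp: f_def indicator_def\<close>)
    define K where "K = (3*u/4) * mA"
    have K: "K > 0" using u mA by (simp add: K_def)
    define t where "t = (C+1)/K"
    have t: "t > 0" using C K by (simp add: t_def)
    define gL where "gL = max 1 ((4/(3*u)) * (u + t))"
    have gL: "gL \<ge> 1" "gL > 0" by (auto simp: gL_def)
    have small: "exp (u - (3*u/4)*gL) * C < K"
    proof -
      have "(3*u/4) * ((4/(3*u)) * (u + t)) = u + t" using u by (simp add: field_simps)
      moreover have "(3*u/4) * ((4/(3*u)) * (u + t)) \<le> (3*u/4) * gL"
        using u by (intro mult_left_mono) (auto simp: gL_def)
      ultimately have "u - (3*u/4)*gL \<le> -t" by linarith
      then have e1: "exp (u - (3*u/4)*gL) \<le> exp (-t)" by simp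
      have "1 + t \<le> exp t" by (rule exp_ge_add_one_self)
      then have e2: "exp (-t) \<le> 1/(1+t)" using t by (simp add: exp_minus divide_simps)
      have "exp (u - (3*u/4)*gL) * C \<le> exp (-t) * C" by (rule mult_right_mono[OF e1 C])
      also have "\<dots> \<le> (1/(1+t)) * C" by (rule mult_right_mono[OF e2 C])
      also have "\<dots> = C/(1+t)" by simp
      also have "\<dots> < K"
      proof -
        have "K * (1+t) = K + C + 1" using K by (simp add: t_def field_simps)
        then have "C < K * (1+t)" using K by linarith
        then show ?thesis using t by (simp add: divide_simps mult.commute)
      qed
      finally show ?thesis .
    qed
    have up: "f 1 gL p - u * f 0 gL p \<le> -(3*u/4) * exp(-gL*(u/4)) * indicator A p + exp(-(gL-1)*u) * f 1 1 p" for p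
    proof (cases "p \<in> S")
      case False then show ?thesis using A(2) by (auto simp: f_def indicator_def)
    next
      case True
      obtain x r where p: "p = (x,r)" by (cases p)
      have xr: "x \<in> Db" "r \<ge> 0" using True SD p by auto
      have fe: "f 1 gL p - u * f 0 gL p = (r - u) * exp (-gL*r)" using True by (simp add: f_def p algebra_simps)
      have f11: "f 1 1 p = r * exp (-r)" using True by (simp add: f_def p)
      have nn: "0 \<le> exp(-(gL-1)*u) * f 1 1 p" unfolding f11 using xr by simp
      show ?thesis
      proof (cases "p \<in> A")
        case pA: True
        then have r: "r \<le> u/4" using A(3) by (auto simp: p)
        then have "exp (-gL*(u/4)) \<le> exp (-gL*r)" using gL by (simp add: mult_left_mono)
        moreover have "r - u \<le> -(3*u/4)" using r by simp
        ultimately have "(r - u) * exp (-gL*r) \<le> -(3*u/4) * exp (-gL*(u/4))"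
        proof -
          assume a1: "exp (-gL*(u/4)) \<le> exp (-gL*r)" and a2: "r - u \<le> -(3*u/4)"
          have "(r - u) * exp (-gL*r) \<le> -(3*u/4) * exp (-gL*r)"
            by (rule mult_right_mono[OF a2]) simp
          also have "\<dots> \<le> -(3*u/4) * exp (-gL*(u/4))"
            by (rule mult_left_mono_neg[OF a1]) (use u in simp)
          finally show ?thesis .
        qed
        then show ?thesis using fe nn pA by simp
      next
        case nA: False
        show ?thesis
        proof (cases "r \<le> u")
          case True
          then have "(r - u) * exp (-gL*r) \<le> 0" by (simp add: mult_nonpos_nonneg)
          then show ?thesis using fe nn nA by simp
        next
          case False
          have "(r - u) * exp (-gL*r) \<le> r * exp (-gL*r)" using u by (simp add: mult_right_mono)
          also have "\<dots> = r * exp (-r) * exp (-(gL-1)*r)" by (simp add: algebra_simps flip: exp_add)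
          also have "\<dots> \<le> r * exp (-r) * exp (-(gL-1)*u)"
          proof -
            have "(1 - gL) * r \<le> (1 - gL) * u" using False gL by (intro mult_left_mono_neg) auto
            then show ?thesis using xr by (intro mult_left_mono) (auto simp: algebra_simps)
          qed
          finally show ?thesis using fe nA f11 by (simp add: mult.commute)
        qed
      qed
    qed
    have iA: "integrable lborel (indicator A :: _ \<Rightarrow> real)"
      using A by (intro integrable_real_indicator) auto
    have "(\<integral>p. f 1 gL p - u * f 0 gL p \<partial>lborel)
        \<le> (\<integral>p. -(3*u/4) * exp(-gL*(u/4)) * indicator A p + exp(-(gL-1)*u) * f 1 1 p \<partial>lborel)"
      by (rule integral_mono) (use up iA int[OF gL(2)] int[of 1] in auto)
    moreover have "(\<integral>p. -(3*u/4) * exp(-gL*(u/4)) * indicator A p + exp(-(gL-1)*u) * f 1 1 p \<partial>lborel)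
        = -(3*u/4) * exp(-gL*(u/4)) * mA + exp(-(gL-1)*u) * C"
      using iA int[of 1] by (simp add: mA_def C_def J)
    moreover have "(\<integral>p. f 1 gL p - u * f 0 gL p \<partial>lborel) = JJ S 1 gL - u * JJ S 0 gL"
      using int[OF gL(2)] by (simp add: J)
    moreover have "-(3*u/4) * exp(-gL*(u/4)) * mA + exp(-(gL-1)*u) * C
        = exp(-gL*(u/4)) * (exp (u - (3*u/4)*gL) * C - K)"
    proof -
      have "exp(-(gL-1)*u) = exp(-gL*(u/4)) * exp (u - (3*u/4)*gL)"
        by (simp add: algebra_simps flip: exp_add)
      then show ?thesis by (simp add: K_def algebra_simps)
    qed
    moreover have "exp(-gL*(u/4)) * (exp (u - (3*u/4)*gL) * C - K) < 0"
      using small by (simp add: mult_pos_neg)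
    ultimately have "JJ S 1 gL < u * JJ S 0 gL" by linarith
    then have hL: "JJ S 1 gL / JJ S 0 gL < u" using pos[OF gL(2)] by (simp add: pos_divide_less_eq)
    have "gs \<le> gL"
    proof (rule ccontr)
      assume "\<not> ?thesis"
      then have "JJ S 1 gs / JJ S 0 gs < JJ S 1 gL / JJ S 0 gL" using dec gL by auto
      then show False using hs hL by linarith
    qed
    then obtain g where g: "gs \<le> g" "g \<le> gL" "JJ S 1 g / JJ S 0 g = u"
      using IVT2[of "\<lambda>g. JJ S 1 g / JJ S 0 g" gL u gs] hs hL cont gs by force
    then show ?thesis using gs by (intro exI[of _ g]) auto
  qed
  show ?thesis
  proof (intro conjI allI impI)
    show "JJ S 1 b / JJ S 0 b < JJ S 1 a / JJ S 0 a" if "0 < a" "a < b" for a b using dec that by blast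
    show "0 < JJ S 0 g" if "0 < g" for g using pos that by blast
    fix u :: real assume u: "u > 0"
    show "\<exists>!g. g > 0 \<and> u = JJ S 1 g / JJ S 0 g"
    proof (rule ex_ex1I)
      show "\<exists>g. g > 0 \<and> u = JJ S 1 g / JJ S 0 g" using exist[OF u] by blast
      fix g1 g2 assume "g1 > 0 \<and> u = JJ S 1 g1 / JJ S 0 g1" "g2 > 0 \<and> u = JJ S 1 g2 / JJ S 0 g2"
      then show "g1 = g2" using dec[of g1 g2] dec[of g2 g1] by (cases g1 g2 rule: linorder_cases) auto
    qed
  qed
qed


lemma annulus_pos:
  fixes c :: "'a::euclidean_space"
  assumes "0 \<le> \<rho>" "\<rho> < R"
  shows "0 < emeasure lborel (ball c R - cball c \<rho>)"
proof -
  define b :: 'a where "b = (SOME i. i \<in> Basis)"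
  have b: "norm b = 1" using SOME_Basis by (simp add: b_def)
  define z where "z = c + ((\<rho>+R)/2) *\<^sub>R b"
  define d where "d = (R - \<rho>)/2"
  have dcz: "dist c z = (\<rho>+R)/2" using assms b by (simp add: z_def dist_norm)
  have sub: "ball z d \<subseteq> ball c R - cball c \<rho>"
  proof
    fix w assume w: "w \<in> ball z d"
    then have "dist z w < d" by simp
    moreover have "dist c w \<le> dist c z + dist z w" by (rule dist_triangle)
    moreover have "dist c z \<le> dist c w + dist z w" using dist_triangle[of c z w] by (simp add: dist_commute)
    ultimately have "dist c w < R \<and> \<rho> < dist c w" using dcz unfolding d_def by (auto simp: field_simps)
    then show "w \<in> ball c R - cball c \<rho>" by auto
  qed
  have "d > 0" using assms by (simp add: d_def)
  then have "0 < measure lborel (ball z d)" by (rule content_ball_pos)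
  then have "0 < emeasure lborel (ball z d)"
    using emeasure_lborel_ball_finite[of z d] by (simp add: emeasure_eq_ennreal_measure)
  also have "\<dots> \<le> emeasure lborel (ball c R - cball c \<rho>)" using sub by (intro emeasure_mono) auto
  finally show ?thesis .
qed

theorem lemma5p2:
  fixes Db :: "(real^'n::finite) set" and R :: real and xt :: "real^'n"
  assumes "R > 0"
    and "open Db" and "connected Db" and "Db \<noteq> {}" and "bounded Db"
    and "smooth_boundary Db"
    and "inner_ball_condition Db R"
    and "\<exists>z. cball z R \<subseteq> interior (cyl Db)"
    and "xt \<in> Db' Db R"
  shows "(\<forall>y\<ge>R. \<forall>a b. 0 < a \<longrightarrow> a < b \<longrightarrow> uu Db R xt b y < uu Db R xt a y)
       \<and> (\<forall>u>0. \<forall>y\<ge>R. \<exists>!lam. lam > 0 \<and> u = uu Db R xt lam y)"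
proof -
  have R: "R > 0" using assms by simp
  have Dbb[measurable]: "Db \<in> sets borel" using assms(2) by simp
  have Dbf: "emeasure lborel Db < \<infinity>"
  proof -
    obtain r where "Db \<subseteq> ball 0 r" using bounded_subset_ballD[OF assms(5)] by blast
    then have "emeasure lborel Db \<le> emeasure lborel (ball (0::real^'n) r)" by (intro emeasure_mono) auto
    then show ?thesis using emeasure_lborel_ball_finite[of "0::real^'n" r] by (simp add: order_le_less_trans)
  qed
  have ballDb: "ball xt R \<subseteq> Db"
  proof
    fix x assume x: "x \<in> ball xt R"
    have "ball (xt, R+1) R \<subseteq> cyl Db" using assms(9) R by (auto simp: Db'_def)
    moreover have "(x, R+1) \<in> ball (xt, R+1) R" using x by (simp add: dist_Pair_Pair)
    ultimately show "x \<in> Db" by (auto simp: cyl_def)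
  qed
  have Bzp: "0 < emeasure lborel (ball xt R)"
    using content_ball_pos[OF R, of xt] emeasure_lborel_ball_finite[of xt R]
    by (simp add: emeasure_eq_ennreal_measure)
  have main: "(\<forall>a b. 0 < a \<longrightarrow> a < b \<longrightarrow> JJ (cyl Db - ball (xt, y) R) 1 b / JJ (cyl Db - ball (xt, y) R) 0 b
                 < JJ (cyl Db - ball (xt, y) R) 1 a / JJ (cyl Db - ball (xt, y) R) 0 a)
       \<and> (\<forall>g>0. JJ (cyl Db - ball (xt, y) R) 0 g > 0)
       \<and> (\<forall>u>0. \<exists>!g. g > 0 \<and> u = JJ (cyl Db - ball (xt, y) R) 1 g / JJ (cyl Db - ball (xt, y) R) 0 g)"
    if y: "y \<ge> R" for y
  proof (rule abstract_main[where Db=Db and Bz="ball xt R" and T="y+R"])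
    show "cyl Db - ball (xt, y) R \<in> sets borel" unfolding cyl_def by (intro sets.Diff Times_borel) auto
    show "cyl Db - ball (xt, y) R \<subseteq> Db \<times> {0..}" by (auto simp: cyl_def)
    show "Db \<in> sets borel" by simp
    show "emeasure lborel Db < \<infinity>" by (rule Dbf)
    show "ball xt R \<in> sets borel" by simp
    show "0 < emeasure lborel (ball xt R)" by (rule Bzp)
    show "emeasure lborel (ball xt R) < \<infinity>" by (rule emeasure_lborel_ball_finite)
    show "0 \<le> y + R" using y R by simp
    show "ball xt R \<times> {y + R<..} \<subseteq> cyl Db - ball (xt, y) R"
    proof
      fix p assume p: "p \<in> ball xt R \<times> {y + R<..}"
      then have "fst p \<in> Db" "snd p \<ge> 0" using ballDb y R by auto
      moreover have "\<not> dist (xt, y) p < R"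
      proof
        assume "dist (xt, y) p < R"
        moreover have "dist y (snd p) \<le> dist (xt, y) p" using dist_snd_le[of "(xt,y)" p] by simp
        moreover have "dist y (snd p) > R" using p by (auto simp: dist_real_def)
        ultimately show False by simp
      qed
      ultimately show "p \<in> cyl Db - ball (xt, y) R" by (cases p) (auto simp: cyl_def)
    qed
    fix e :: real assume e: "e > 0"
    define \<epsilon> where "\<epsilon> = min e (R/4)"
    have eps: "\<epsilon> > 0" "\<epsilon> \<le> e" "\<epsilon> \<le> R/4" using e R by (auto simp: \<epsilon>_def)
    define \<rho> where "\<rho> = sqrt (2*R*\<epsilon>)"
    have rho: "0 \<le> \<rho>" "\<rho> < R"
    proof -
      show "0 \<le> \<rho>" using eps R by (simp add: \<rho>_def)
      have "2*R*\<epsilon> < R^2" using eps R by (simp add: power2_eq_square)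
      then have "\<rho> < sqrt (R^2)" unfolding \<rho>_def by (rule real_sqrt_less_mono)
      then show "\<rho> < R" using R by simp
    qed
    define A where "A = (ball xt R - cball xt \<rho>) \<times> {0..\<epsilon>}"
    show "\<exists>A. A \<in> sets borel \<and> A \<subseteq> cyl Db - ball (xt, y) R \<and> A \<subseteq> UNIV \<times> {..e} \<and>
              0 < emeasure lborel A \<and> emeasure lborel A < \<infinity>"
    proof (intro exI[of _ A] conjI)
      show "A \<in> sets borel" unfolding A_def by (intro Times_borel) auto
      show "A \<subseteq> UNIV \<times> {..e}" using eps by (auto simp: A_def)
      show "A \<subseteq> cyl Db - ball (xt, y) R"
      proof
        fix p assume "p \<in> A"
        then obtain x r where p: "p = (x, r)" and x: "x \<in> ball xt R" "\<rho> < dist xt x" and r: "0 \<le> r" "r \<le> \<epsilon>"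
          by (auto simp: A_def)
        have "(dist xt x)^2 \<ge> \<rho>^2" using x rho by (intro power_mono) auto
        then have d1: "(dist xt x)^2 \<ge> 2*R*\<epsilon>" using eps R by (simp add: \<rho>_def)
        have "y - r \<ge> R - \<epsilon>" using y r by simp
        moreover have "R - \<epsilon> \<ge> 0" using eps R by simp
        ultimately have "(y - r)^2 \<ge> (R - \<epsilon>)^2" by (intro power_mono) auto
        then have d2: "(dist y r)^2 \<ge> (R - \<epsilon>)^2" by (simp add: dist_real_def power2_abs power2_commute)
        have "R^2 \<le> (dist xt x)^2 + (dist y r)^2"
          using d1 d2 by (simp add: power2_diff power2_eq_square algebra_simps) (smt (verit) eps(1) mult_pos_pos)
        then have "sqrt (R^2) \<le> sqrt ((dist xt x)^2 + (dist y r)^2)" by (rule real_sqrt_le_mono)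
        then have "R \<le> dist (xt, y) (x, r)" using R by (simp add: dist_Pair_Pair)
        moreover have "x \<in> Db" using x ballDb by auto
        ultimately show "p \<in> cyl Db - ball (xt, y) R" using r p by (auto simp: cyl_def)
      qed
      have eA: "emeasure lborel A = emeasure lborel (ball xt R - cball xt \<rho>) * ennreal \<epsilon>"
        unfolding A_def using eps by (subst emeasure_Times_lborel) auto
      show "0 < emeasure lborel A" unfolding eA using annulus_pos[OF rho] eps
        by (simp add: ennreal_zero_less_mult_iff)
      have "emeasure lborel (ball xt R - cball xt \<rho>) \<le> emeasure lborel (ball xt R)" by (intro emeasure_mono) auto
      then have "emeasure lborel (ball xt R - cball xt \<rho>) < \<infinity>"
        using emeasure_lborel_ball_finite[of xt R] by (simp add: order_le_less_trans)
      then show "emeasure lborel A < \<infinity>" unfolding eA by (simp add: ennreal_mult_less_top)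
    qed
  qed
  have hk: "hk Db R xt k g y = g * JJ (cyl Db - ball (xt, y) R) k g" for k g y
  proof -
    have "hk Db R xt k g y = (\<integral>p. (indicator (cyl Db - ball (xt, y) R) p *
         (snd p ^ k * exp (- g * snd p))) * g \<partial>lborel)"
      unfolding hk_def set_lebesgue_integral_def by (intro Bochner_Integration.integral_cong) (auto simp: split_beta)
    also have "\<dots> = g * JJ (cyl Db - ball (xt, y) R) k g" by (simp add: JJ_def mult.commute)
    finally show ?thesis .
  qed
  have uu: "uu Db R xt g y = JJ (cyl Db - ball (xt, y) R) 1 g / JJ (cyl Db - ball (xt, y) R) 0 g" if "g > 0" for g y
    unfolding uu_def hk using that by simp
  show ?thesis
  proof (intro conjI allI impI)
    fix y a b :: real assume "R \<le> y" "0 < a" "a < b"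
    then show "uu Db R xt b y < uu Db R xt a y" using main[of y] by (simp add: uu)
  next
    fix u y :: real assume "0 < u" "R \<le> y"
    then have "\<exists>!g. g > 0 \<and> u = JJ (cyl Db - ball (xt, y) R) 1 g / JJ (cyl Db - ball (xt, y) R) 0 g"
      using main[of y] by blast
    moreover have "(lam > 0 \<and> u = uu Db R xt lam y) \<longleftrightarrow>
        (lam > 0 \<and> u = JJ (cyl Db - ball (xt, y) R) 1 lam / JJ (cyl Db - ball (xt, y) R) 0 lam)" for lam
      using uu by auto
    ultimately show "\<exists>!lam. lam > 0 \<and> u = uu Db R xt lam y" by simp
  qed
qed

end
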